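(* In the large-election setting of the context, let $\rho=\frac{q-1/2}{1-q}$. If $v_\ell/v_w>\rho$, then there exists $N$ such that for all odd $n>N$ the $n$-voter collective choice problem is adversely correlated; otherwise (if $v_\ell/v_w\le\rho$), for every odd $n$ the $n$-voter collective choice problem is advantageously correlated.
   Context: Fix $q\in[1/2,1)$, $v_w,v_\ell>0$ with $v_\ell/v_w<q/(1-q)$, and $\lambda\in(0,1)$. For each odd $n\ge3$, the $n$-voter collective choice problem is: voters $1,\dots,n$ vote for $p^*$ or $p_*$; a policy wins iff it gets more than $\tau=(n-1)/2$ votes. Exactly $\lceil qn\rceil$ voters are winners, the set of winners being uniformly distributed among subsets of that size; a winner gets payoff $v_w$ higher from $p^*$ than from $p_*$, a loser gets payoff $v_\ell$ lower (so $V_i^d\in\{v_w,-v_\ell\}$). Independently, each voter with probability $\lambda$ privately learns whether she is a winner (good news, or bad news) and otherwise receives an uninformative signal $s^0$. Let $G,B$ be the numbers of voters with good and bad news and $V^G(\kappa)=E[V_i^d\mid G=\kappa,B=0,S_i=s^0]$. The problem is adversely correlated if $V^G(\kappa)<0$ for some $\kappa\in\{1,\dots,\tau\}$ and advantageously correlated otherwise. *)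

theory Defs
  imports Complex_Main
begin

text \<open>The state of the world
  consists of the set W of winners (uniform among subsets of {1..n} of size ceil(q n))
  and the set I of informed voters (each voter independently informed with probability lam).
  An informed voter j receives good news iff j is a winner, bad news otherwise;
  an uninformed voter receives the uninformative signal s0.\<close>

definition num_winners :: "real \<Rightarrow> nat \<Rightarrow> nat" where
  "num_winners q n = nat \<lceil>q * real n\<rceil>"

definition winner_sets :: "real \<Rightarrow> nat \<Rightarrow> nat set set" where
  "winner_sets q n = {W. W \<subseteq> {1..n} \<and> card W = num_winners q n}"

definition outcomes :: "real \<Rightarrow> nat \<Rightarrow> (nat set \<times> nat set) set" where
  "outcomes q n = winner_sets q n \<times> Pow {1..n}"

definition weight :: "real \<Rightarrow> real \<Rightarrow> nat \<Rightarrow> nat set \<times> nat set \<Rightarrow> real" where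
  "weight q lam n \<omega> =
     (1 / real (card (winner_sets q n))) * lam ^ card (snd \<omega>) * (1 - lam) ^ (n - card (snd \<omega>))"

text \<open>Payoff difference V_i^d between p* and p_* for voter i.\<close>
definition payoff_diff :: "real \<Rightarrow> real \<Rightarrow> nat \<Rightarrow> nat set \<Rightarrow> real" where
  "payoff_diff vw vl i W = (if i \<in> W then vw else - vl)"

definition good_news :: "nat set \<times> nat set \<Rightarrow> nat" where
  "good_news \<omega> = card (snd \<omega> \<inter> fst \<omega>)"

definition bad_news :: "nat set \<times> nat set \<Rightarrow> nat" where
  "bad_news \<omega> = card (snd \<omega> - fst \<omega>)"

definition cond_event :: "real \<Rightarrow> nat \<Rightarrow> nat \<Rightarrow> nat \<Rightarrow> (nat set \<times> nat set) set" where
  "cond_event q n i k = {\<omega> \<in> outcomes q n. good_news \<omega> = k \<and> bad_news \<omega> = 0 \<and> i \<notin> snd \<omega>}"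

text \<open>V^G(k) = E[V_i^d | G = k, B = 0, S_i = s0], taken for voter i = 1
  (by symmetry it does not depend on i).\<close>
definition VG :: "real \<Rightarrow> real \<Rightarrow> real \<Rightarrow> real \<Rightarrow> nat \<Rightarrow> nat \<Rightarrow> real" where
  "VG q vw vl lam n k =
     (\<Sum>\<omega>\<in>cond_event q n 1 k. weight q lam n \<omega> * payoff_diff vw vl 1 (fst \<omega>))
     / (\<Sum>\<omega>\<in>cond_event q n 1 k. weight q lam n \<omega>)"

definition adversely_correlated :: "real \<Rightarrow> real \<Rightarrow> real \<Rightarrow> real \<Rightarrow> nat \<Rightarrow> bool" where
  "adversely_correlated q vw vl lam n \<longleftrightarrow>
     (\<exists>k\<in>{1..(n - 1) div 2}. VG q vw vl lam n k < 0)"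

definition advantageously_correlated :: "real \<Rightarrow> real \<Rightarrow> real \<Rightarrow> real \<Rightarrow> nat \<Rightarrow> bool" where
  "advantageously_correlated q vw vl lam n \<longleftrightarrow> \<not> adversely_correlated q vw vl lam n"

end

theory Submission
  imports Defs
begin

lemma cond_eq:
  "cond_event q n 1 k = Sigma (winner_sets q n) (\<lambda>W. {I. I \<subseteq> W - {1} \<and> card I = k})"
proof (rule set_eqI)
  fix \<omega> :: "nat set \<times> nat set"
  obtain W I where w: "\<omega> = (W, I)" by fastforce
  show "\<omega> \<in> cond_event q n 1 k \<longleftrightarrow> \<omega> \<in> Sigma (winner_sets q n) (\<lambda>W. {I. I \<subseteq> W - {1} \<and> card I = k})"
  proof
    assume a: "\<omega> \<in> cond_event q n 1 k"
    hence ws: "W \<in> winner_sets q n" and I: "I \<subseteq> {1..n}" and c1: "card (I \<inter> W) = k"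
      and c2: "card (I - W) = 0" and n1: "1 \<notin> I"
      by (auto simp: cond_event_def outcomes_def good_news_def bad_news_def w)
    have fI: "finite I" using I finite_subset by blast
    have "finite (I - W)" using fI by simp
    hence "I - W = {}" using c2 by simp
    hence "I \<subseteq> W" by blast
    hence "I \<inter> W = I" by blast
    thus "\<omega> \<in> Sigma (winner_sets q n) (\<lambda>W. {I. I \<subseteq> W - {1} \<and> card I = k})"
      using ws c1 n1 \<open>I \<subseteq> W\<close> w by auto
  next
    assume "\<omega> \<in> Sigma (winner_sets q n) (\<lambda>W. {I. I \<subseteq> W - {1} \<and> card I = k})"
    hence ws: "W \<in> winner_sets q n" and I: "I \<subseteq> W - {1}" and c: "card I = k" using w by auto
    have W: "W \<subseteq> {1..n}" using ws by (simp add: winner_sets_def)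
    have e1: "I \<inter> W = I" "I - W = {}" using I by auto
    have e2: "card (I \<inter> W) = k" "card (I - W) = 0" using e1 c by (simp, metis card.empty)
    show "\<omega> \<in> cond_event q n 1 k"
      using ws I W e2 by (auto simp: cond_event_def outcomes_def good_news_def bad_news_def w)
  qed
qed

lemma card_ws: "card (winner_sets q n) = n choose num_winners q n"
  unfolding winner_sets_def using n_subsets[of "{1..n}"] by simp

lemma fin_ws: "finite (winner_sets q n)"
  unfolding winner_sets_def by (rule finite_subset[of _ "Pow {1..n}"]) auto

lemma card_ws_out: "card (winner_sets q n \<inter> - {W. 1 \<in> W}) = (n - 1) choose num_winners q n"
proof -
  have e: "{2..n} = {1..n} - {1::nat}" by auto
  have "winner_sets q n \<inter> - {W. 1 \<in> W} = {W. W \<subseteq> {2..n} \<and> card W = num_winners q n}"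
    unfolding winner_sets_def e by auto
  thus ?thesis using n_subsets[of "{2..n}"] by simp
qed

lemma card_ws_in: assumes "num_winners q n \<ge> 1" "n \<ge> 1"
  shows "card (winner_sets q n \<inter> {W. 1 \<in> W}) = (n - 1) choose (num_winners q n - 1)"
proof -
  let ?m = "num_winners q n"
  let ?S = "{S. S \<subseteq> {2..n} \<and> card S = ?m - 1}"
  have inj: "inj_on (insert 1) ?S"
  proof (rule inj_onI)
    fix x y assume "x \<in> ?S" "y \<in> ?S" "insert 1 x = insert 1 y"
    moreover have "1 \<notin> x" "1 \<notin> y" using calculation by auto
    ultimately show "x = y" by (metis Diff_insert_absorb)
  qed
  have img: "insert 1 ` ?S = winner_sets q n \<inter> {W. 1 \<in> W}"
  proof (rule set_eqI, rule iffI)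
    fix W assume "W \<in> insert 1 ` ?S"
    then obtain S where S: "S \<in> ?S" "W = insert 1 S" by blast
    have fS: "finite S" using S(1) finite_subset by auto
    have "1 \<notin> S" using S(1) by auto
    hence "card W = ?m" using S fS assms by simp
    thus "W \<in> winner_sets q n \<inter> {W. 1 \<in> W}" using S assms unfolding winner_sets_def by auto
  next
    fix W assume W: "W \<in> winner_sets q n \<inter> {W. 1 \<in> W}"
    hence W1: "W \<subseteq> {1..n}" "card W = ?m" "1 \<in> W" unfolding winner_sets_def by auto
    have fW: "finite W" using W1 finite_subset by auto
    have "W - {1} \<in> ?S" using W1 fW by auto
    moreover have "W = insert 1 (W - {1})" using W1 by auto
    ultimately show "W \<in> insert 1 ` ?S" by blast
  qed
  have "card (winner_sets q n \<inter> {W. 1 \<in> W}) = card ?S"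
    using card_image[OF inj] img by simp
  thus ?thesis using n_subsets[of "{2..n}"] by simp
qed

lemma sum_cond:
  fixes g :: "nat set \<Rightarrow> real" and q lam :: real and n k :: nat
  defines "c \<equiv> (1 / real (card (winner_sets q n))) * lam ^ k * (1 - lam) ^ (n - k)"
  shows "(\<Sum>\<omega>\<in>cond_event q n 1 k. weight q lam n \<omega> * g (fst \<omega>))
     = c * (\<Sum>W\<in>winner_sets q n. real (card {I. I \<subseteq> W - {1} \<and> card I = k}) * g W)"
proof -
  let ?IS = "\<lambda>W. {I. I \<subseteq> W - {1} \<and> card I = k}"
  have finIS: "finite (?IS W)" if "W \<in> winner_sets q n" for W
  proof -
    have "finite W" using that unfolding winner_sets_def using finite_subset by auto
    hence "finite (Pow W)" by simp
    moreover have "?IS W \<subseteq> Pow W" by auto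
    ultimately show ?thesis using finite_subset by blast
  qed
  have "(\<Sum>\<omega>\<in>cond_event q n 1 k. weight q lam n \<omega> * g (fst \<omega>))
      = (\<Sum>\<omega>\<in>Sigma (winner_sets q n) ?IS. c * g (fst \<omega>))"
    unfolding cond_eq
    by (rule sum.cong) (auto simp: weight_def c_def)
  also have "\<dots> = (\<Sum>W\<in>winner_sets q n. \<Sum>I\<in>?IS W. c * g W)"
    using sum.Sigma[OF fin_ws, where B="?IS" and g="\<lambda>W I. c * g W"] finIS by (simp add: case_prod_beta)
  also have "\<dots> = (\<Sum>W\<in>winner_sets q n. c * (real (card (?IS W)) * g W))"
    by (rule sum.cong) auto
  also have "\<dots> = c * (\<Sum>W\<in>winner_sets q n. real (card (?IS W)) * g W)"
    by (simp add: sum_distrib_left)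
  finally show ?thesis .
qed

lemma card_IS:
  assumes "W \<in> winner_sets q n"
  shows "card {I. I \<subseteq> W - {1} \<and> card I = k}
      = (if 1 \<in> W then (num_winners q n - 1) choose k else num_winners q n choose k)"
proof -
  have fW: "finite W" "card W = num_winners q n"
    using assms unfolding winner_sets_def using finite_subset by auto
  have "card {I. I \<subseteq> W - {1} \<and> card I = k} = card (W - {1}) choose k"
    using n_subsets[of "W - {1}" k] fW by simp
  thus ?thesis using fW by auto
qed

lemma sum_ws_if:
  assumes "num_winners q n \<ge> 1" "n \<ge> 1"
  shows "(\<Sum>W\<in>winner_sets q n. if 1 \<in> W then (\<alpha>::real) else \<beta>)
     = real ((n - 1) choose (num_winners q n - 1)) * \<alpha> + real ((n - 1) choose num_winners q n) * \<beta>"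
  using sum.If_cases[OF fin_ws, of "\<lambda>W. 1 \<in> W" "\<lambda>_. \<alpha>" "\<lambda>_. \<beta>" q n]
    card_ws_in[OF assms] card_ws_out[of q n] by simp

lemma binom_rel:
  assumes "1 \<le> m" "m \<le> n" "k < m"
  shows "((n - 1) choose m) * (m choose k) * (m - k) = ((n - 1) choose (m - 1)) * ((m - 1) choose k) * (n - m)"
proof -
  have e1: "(m choose k) * (m - k) = m * ((m - 1) choose k)"
    using binomial_absorb_comp[of m k] by (simp add: mult.commute)
  have e2: "m * ((n - 1) choose m) = (n - 1) * ((n - 1 - 1) choose (m - 1))"
    using times_binomial_minus1_eq[of m "n - 1"] assms by simp
  have e3: "((n - 1) - (m - 1)) * ((n - 1) choose (m - 1)) = (n - 1) * ((n - 1 - 1) choose (m - 1))"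
    using binomial_absorb_comp[of "n - 1" "m - 1"] by simp
  have e4: "(n - 1) - (m - 1) = n - m" using assms by simp
  have "((n - 1) choose m) * (m choose k) * (m - k) = ((n - 1) choose m) * m * ((m - 1) choose k)"
    using e1 by (simp add: mult.assoc)
  also have "\<dots> = ((n - 1) choose (m - 1)) * (n - m) * ((m - 1) choose k)"
    using e2 e3 e4 by (simp add: mult.commute)
  finally show ?thesis by (simp add: mult_ac)
qed

lemma VG_neg_iff:
  fixes q vw vl lam :: real and n k :: nat
  assumes lam: "0 < lam" "lam < 1" and n: "1 \<le> n" and km: "k < num_winners q n"
    and mn: "num_winners q n \<le> n"
  shows "VG q vw vl lam n k < 0 \<longleftrightarrow>
           vw * (real (num_winners q n) - real k) < vl * (real n - real (num_winners q n))"
proof -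
  define m where "m = num_winners q n"
  define c where "c = (1 / real (card (winner_sets q n))) * lam ^ k * (1 - lam) ^ (n - k)"
  define A where "A = real (((n - 1) choose (m - 1)) * ((m - 1) choose k))"
  define B where "B = real (((n - 1) choose m) * (m choose k))"
  have m1: "1 \<le> m" using km m_def by simp
  have cpos: "c > 0" unfolding c_def card_ws using lam mn m_def by simp
  have Apos: "A > 0" unfolding A_def using km mn m_def by simp
  let ?IS = "\<lambda>W. {I. I \<subseteq> W - {1} \<and> card I = (k::nat)}"
  have num: "(\<Sum>\<omega>\<in>cond_event q n 1 k. weight q lam n \<omega> * payoff_diff vw vl 1 (fst \<omega>)) = c * (A * vw - B * vl)"
  proof -
    have "(\<Sum>W\<in>winner_sets q n. real (card (?IS W)) * payoff_diff vw vl 1 W)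
        = (\<Sum>W\<in>winner_sets q n. if 1 \<in> W then real ((m - 1) choose k) * vw else real (m choose k) * (- vl))"
    proof (rule sum.cong[OF refl])
      fix W assume W: "W \<in> winner_sets q n"
      show "real (card (?IS W)) * payoff_diff vw vl 1 W = (if 1 \<in> W then real ((m - 1) choose k) * vw else real (m choose k) * (- vl))"
        using card_IS[OF W, of k] by (cases "1 \<in> W") (simp_all add: payoff_diff_def m_def)
    qed
    also have "\<dots> = A * vw - B * vl"
      using sum_ws_if[of q n] m1 n unfolding A_def B_def m_def by simp
    finally show ?thesis using sum_cond[where g="payoff_diff vw vl 1" and q=q and lam=lam and n=n and k=k] c_def by simp
  qed
  have den: "(\<Sum>\<omega>\<in>cond_event q n 1 k. weight q lam n \<omega>) = c * (A + B)"
  proof -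
    have "(\<Sum>W\<in>winner_sets q n. real (card (?IS W)) * 1)
        = (\<Sum>W\<in>winner_sets q n. if 1 \<in> W then real ((m - 1) choose k) else real (m choose k))"
    proof (rule sum.cong[OF refl])
      fix W assume W: "W \<in> winner_sets q n"
      show "real (card (?IS W)) * 1 = (if 1 \<in> W then real ((m - 1) choose k) else real (m choose k))"
        using card_IS[OF W, of k] by (cases "1 \<in> W") (simp_all add: m_def)
    qed
    also have "\<dots> = A + B"
      using sum_ws_if[of q n] m1 n unfolding A_def B_def m_def by simp
    finally show ?thesis using sum_cond[where g="\<lambda>_. 1" and q=q and lam=lam and n=n and k=k] c_def by simp
  qed
  have Bge: "B \<ge> 0" unfolding B_def by simp
  have VG: "VG q vw vl lam n k = (A * vw - B * vl) / (A + B)"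
    unfolding VG_def num den using cpos by simp
  have rel: "B * (real m - real k) = A * (real n - real m)"
  proof -
    have "real (((n - 1) choose m) * (m choose k) * (m - k)) = real (((n - 1) choose (m - 1)) * ((m - 1) choose k) * (n - m))"
      using binom_rel[OF m1 mn[folded m_def] km[folded m_def]] by simp
    thus ?thesis unfolding A_def B_def using km mn m_def by (simp add: of_nat_diff)
  qed
  have mk: "real m - real k > 0" using km m_def by simp
  have "VG q vw vl lam n k < 0 \<longleftrightarrow> A * vw < B * vl"
    unfolding VG using Apos Bge by (simp add: divide_less_0_iff)
  also have "\<dots> \<longleftrightarrow> A * vw * (real m - real k) < B * vl * (real m - real k)"
    using mk by simp
  also have "B * vl * (real m - real k) = A * (vl * (real n - real m))"
  proof -
    have "B * vl * (real m - real k) = vl * (B * (real m - real k))" by simp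
    also have "\<dots> = A * (vl * (real n - real m))" using rel by simp
    finally show ?thesis .
  qed
  also have "A * vw * (real m - real k) < A * (vl * (real n - real m)) \<longleftrightarrow> vw * (real m - real k) < vl * (real n - real m)"
    using Apos by (simp add: mult.assoc)
  finally show ?thesis unfolding m_def .
qed

lemma m_bounds:
  fixes q :: real
  assumes "1/2 \<le> q" "q < 1"
  shows "q * real n \<le> real (num_winners q n)" "real (num_winners q n) < q * real n + 1"
    "num_winners q n \<le> n"
proof -
  have nn: "q * real n \<ge> 0" using assms by simp
  have r: "real (num_winners q n) = real_of_int \<lceil>q * real n\<rceil>"
    unfolding num_winners_def using nn by simp
  show "q * real n \<le> real (num_winners q n)" using r by linarith
  show "real (num_winners q n) < q * real n + 1" using r by linarith
  have "q * real n \<le> 1 * real n" using mult_right_mono[of q 1 "real n"] assms by simp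
  hence "\<lceil>q * real n\<rceil> \<le> int n" by (simp add: ceiling_le_iff)
  hence "nat \<lceil>q * real n\<rceil> \<le> nat (int n)" by (rule nat_mono)
  thus "num_winners q n \<le> n" unfolding num_winners_def by simp
qed

theorem proposition4:
  fixes q vw vl lam :: real
  assumes "1/2 \<le> q" and "q < 1"
    and "vw > 0" and "vl > 0" and "vl / vw < q / (1 - q)"
    and "0 < lam" and "lam < 1"
  shows "(vl / vw > (q - 1/2) / (1 - q) \<longrightarrow>
            (\<exists>N. \<forall>n. odd n \<and> n > N \<longrightarrow> adversely_correlated q vw vl lam n))
       \<and> (vl / vw \<le> (q - 1/2) / (1 - q) \<longrightarrow>
            (\<forall>n. odd n \<and> n \<ge> 3 \<longrightarrow> advantageously_correlated q vw vl lam n))"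
proof (intro conjI impI)
  have q1: "1 - q > 0" using assms by simp
  have kless: "k < num_winners q n" if "k \<in> {1..(n - 1) div 2}" for n k
  proof -
    have "2 * k \<le> n - 1" "k \<ge> 1" using that by auto
    hence "2 * k < n" by arith
    hence "real (2 * k) < real n" by (simp only: of_nat_less_iff)
    hence "2 * real k < real n" by simp
    moreover have "1/2 * real n \<le> q * real n" using mult_right_mono[of "1/2" q "real n"] assms(1) by simp
    ultimately have "real k < q * real n" by linarith
    thus ?thesis using m_bounds(1)[OF assms(1,2), of n] by linarith
  qed
  {
    assume "vl / vw > (q - 1/2) / (1 - q)"
    hence h: "vl * (1 - q) > (q - 1/2) * vw" using q1 assms(3) by (simp add: field_simps)
    define \<delta> where "\<delta> = vl * (1 - q) - (q - 1/2) * vw"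
    have dpos: "\<delta> > 0" using h \<delta>_def by simp
    define N where "N = nat \<lceil>(3/2 * vw + vl) / \<delta>\<rceil> + 3"
    show "\<exists>N. \<forall>n. odd n \<and> n > N \<longrightarrow> adversely_correlated q vw vl lam n"
    proof (intro exI allI impI)
      fix n assume n: "odd n \<and> N < n"
      define t where "t = (n - 1) div 2"
      have n3: "n \<ge> 3" using n N_def by simp
      have "n = 2 * t + 1" using n unfolding t_def by presburger
      hence "real n = real (2 * t + 1)" by simp
      hence tr: "2 * real t = real n - 1" by simp
      have t1: "t \<in> {1..(n - 1) div 2}" using n3 t_def by auto
      have nbig: "real n * \<delta> \<ge> 3/2 * vw + vl"
      proof -
        have "(3/2 * vw + vl) / \<delta> \<le> real N" unfolding N_def by linarith
        also have "\<dots> \<le> real n" using n by simp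
        finally show ?thesis using dpos by (simp add: divide_le_eq)
      qed
      define m where "m = num_winners q n"
      have mb: "real m < q * real n + 1" using m_bounds(2)[OF assms(1,2)] m_def by simp
      have "vl * (real n - real m) - vw * (real m - real t)
          = vl * real n + vw * real t - (vl + vw) * real m" by (simp add: algebra_simps)
      also have "\<dots> > vl * real n + vw * real t - (vl + vw) * (q * real n + 1)"
        using mb assms(3,4) by (simp add: mult_strict_left_mono)
      also have "vl * real n + vw * real t - (vl + vw) * (q * real n + 1) = real n * \<delta> - (3/2 * vw + vl)"
      proof -
        have tt: "real t = (real n - 1) / 2" using tr by simp
        show ?thesis unfolding \<delta>_def tt by (simp add: field_simps)
      qed
      finally have "vw * (real m - real t) < vl * (real n - real m)" using nbig by linarith
      hence "VG q vw vl lam n t < 0"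
        using VG_neg_iff[OF assms(6,7), of n t q vw vl] kless[OF t1] m_bounds(3)[OF assms(1,2), of n] n3 m_def
        by simp
      thus "adversely_correlated q vw vl lam n" unfolding adversely_correlated_def using t1 t_def by blast
    qed
  }
  {
    assume "vl / vw \<le> (q - 1/2) / (1 - q)"
    hence h: "vl * (1 - q) \<le> (q - 1/2) * vw" using q1 assms(3) by (simp add: field_simps)
    show "\<forall>n. odd n \<and> n \<ge> 3 \<longrightarrow> advantageously_correlated q vw vl lam n"
    proof (intro allI impI)
      fix n :: nat assume n: "odd n \<and> n \<ge> 3"
      show "advantageously_correlated q vw vl lam n"
        unfolding advantageously_correlated_def adversely_correlated_def
      proof
        assume "\<exists>k\<in>{1..(n - 1) div 2}. VG q vw vl lam n k < 0"
        then obtain k where k: "k \<in> {1..(n - 1) div 2}" "VG q vw vl lam n k < 0" by blast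
        define m where "m = num_winners q n"
        have mb: "q * real n \<le> real m" "m \<le> n" using m_bounds[OF assms(1,2)] m_def by auto
        have neg: "vw * (real m - real k) < vl * (real n - real m)"
          using VG_neg_iff[OF assms(6,7), of n k q vw vl] kless[OF k(1)] mb(2) n k(2) m_def by simp
        have k2: "2 * real k \<le> real n - 1" using k(1) n by auto
        have nm: "real n - real m \<ge> 0" using mb by simp
        have a1: "vl * (real n - real m) * (1 - q) \<le> (q - 1/2) * vw * (real n - real m)"
          using mult_right_mono[OF h nm] by (simp add: algebra_simps)
        have a2: "(q - 1/2) * (real n - real m) \<le> (1 - q) * (real m - real k)"
        proof -
          define P where "P = (1 - q) * ((real n - 1) / 2 - real k)"
          define Q where "Q = q * real n"
          have e: "(1 - q) * (real m - real k) - (q - 1/2) * (real n - real m)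
              = real m / 2 - Q / 2 + P + (1 - q) / 2"
            unfolding P_def Q_def by (simp add: field_simps)
          have "P \<ge> 0" unfolding P_def using q1 k2 by simp
          moreover have "Q \<le> real m" unfolding Q_def using mb(1) .
          ultimately have "real m / 2 - Q / 2 + P + (1 - q) / 2 \<ge> 0" using q1 by (simp add: field_simps)
          hence "(1 - q) * (real m - real k) - (q - 1/2) * (real n - real m) \<ge> 0" by (simp only: e)
          thus ?thesis by simp
        qed
        have "vl * (real n - real m) * (1 - q) \<le> vw * ((1 - q) * (real m - real k))"
          using a1 mult_left_mono[OF a2, of vw] assms(3) by (simp add: algebra_simps)
        hence "(vl * (real n - real m)) * (1 - q) \<le> (vw * (real m - real k)) * (1 - q)"
          by (simp add: mult_ac)
        hence "vl * (real n - real m) \<le> vw * (real m - real k)"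
          using q1 mult_right_le_imp_le by blast
        thus False using neg by simp
      qed
    qed
  }
qed

end
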